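(* Let $X=(V,E,T)$ be an $(s,k,K)$-two layer system and let $C\subseteq\mathbb{F}_p^V$ be a linear code modelled over $X$ with constraint set $\mathcal{E}$ ($p$ a prime power). For every $v_0\in V$ and every $\underline{c}\in\mathbb{F}_p^V$ there is $\underline{c}'\in\mathbb{F}_p^V$ with $\underline{c}'(v)=\underline{c}(v)$ for all $v\ne v_0$ and $$\frac{m_{v_0}(\{\operatorname{supp}(\underline{e}):\underline{e}\in\mathcal{E},\ \operatorname{supp}(\underline{e})\in E_{v_0},\ \underline{e}\cdot\underline{c}'\neq0\})}{m_{v_0}(E_{v_0})}\le\frac{p-1}{p}.$$
   Context: Let $s,k,K$ be positive integers. An $(s,k,K)$-two layer system is a triple $X=(V,E,T)$ where: $V$ is a finite set; $E\subseteq 2^V$ with $|\tau|=k$ for all $\tau\in E$ and $\bigcup_{\tau\in E}\tau=V$; $T\subseteq 2^E$ with $|\sigma|=K$ for all $\sigma\in T$ and $\bigcup_{\sigma\in T}\sigma=E$. Write $v\in\sigma$ if $v\in\tau$ for some $\tau\in\sigma$; it is required that $2\le|\{\tau\in\sigma:v\in\tau\}|\le s$ for all $\sigma\in T$, $v\in\sigma$. A positive $w:T\to\mathbb{R}_{>0}$ is fixed and extended by $w(\tau)=\sum_{\sigma\ni\tau}w(\sigma)$ for $\tau\in E$. For $v\in V$, $E_v=\{\tau\in E:v\in\tau\}$; the link of $v$ is the graph on $E_v$ where distinct $\tau_1,\tau_2$ are adjacent iff some $\sigma\in T$ contains both, with weight $m_v(\{\tau_1,\tau_2\})=\sum_{\sigma\in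 T,\tau_1,\tau_2\in\sigma}w(\sigma)$; $m_v(\tau)$ is the sum of weights of link edges at $\tau$, and $m_v(B)=\sum_{\tau\in B}m_v(\tau)$ for $B\subseteq E_v$. Codes: $\mathbb{F}_p$ is the field with $p$ elements; $\underline{e}\cdot\underline{c}=\sum_v\underline{e}(v)\underline{c}(v)$, $\operatorname{supp}(\underline{e})=\{v:\underline{e}(v)\neq0\}$. A linear code $C\subseteq\mathbb{F}_p^V$ is modelled over $X$ if there is $\mathcal{E}\subseteq\mathbb{F}_p^V$ with $C=\{\underline{c}:\underline{e}\cdot\underline{c}=0\ \forall\underline{e}\in\mathcal{E}\}$ such that $\underline{e}\mapsto\operatorname{supp}(\underline{e})$ is a bijection $\mathcal{E}\to E$, and a set $\mathcal{T}$ of linear dependencies (functions $\operatorname{ld}:\mathcal{E}\to\mathbb{F}_p$ with $\sum_{\underline{e}}\operatorname{ld}(\underline{e})(\underline{e}\cdot\underline{c})=0$ for all $\underline{c}$) with $T=\{\{\operatorname{supp}(\underline{e}):\operatorname{ld}(\underline{e})\ne0\}:\operatorname{ld}\in\mathcal{T}\}$. *)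

theory Defs
  imports Complex_Main
begin

definition two_layer_system ::
  "nat \<Rightarrow> nat \<Rightarrow> nat \<Rightarrow> 'v set \<Rightarrow> 'v set set \<Rightarrow> 'v set set set \<Rightarrow> bool" where
  "two_layer_system s k K V E T \<longleftrightarrow>
     0 < s \<and> 0 < k \<and> 0 < K \<and> finite V \<and>
     E \<subseteq> Pow V \<and> (\<forall>\<tau>\<in>E. card \<tau> = k) \<and> \<Union>E = V \<and>
     T \<subseteq> Pow E \<and> (\<forall>\<sigma>\<in>T. card \<sigma> = K) \<and> \<Union>T = E \<and>
     (\<forall>\<sigma>\<in>T. \<forall>v. v \<in> \<Union>\<sigma> \<longrightarrow>
        2 \<le> card {\<tau>\<in>\<sigma>. v \<in> \<tau>} \<and> card {\<tau>\<in>\<sigma>. v \<in> \<tau>} \<le> s)"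

definition E_at :: "'v set set \<Rightarrow> 'v \<Rightarrow> 'v set set" where
  "E_at E v = {\<tau>\<in>E. v \<in> \<tau>}"

definition link_adj :: "'v set set \<Rightarrow> 'v set set set \<Rightarrow> 'v \<Rightarrow> 'v set \<Rightarrow> 'v set \<Rightarrow> bool" where
  "link_adj E T v \<tau>1 \<tau>2 \<longleftrightarrow> \<tau>1 \<in> E_at E v \<and> \<tau>2 \<in> E_at E v \<and> \<tau>1 \<noteq> \<tau>2 \<and>
     (\<exists>\<sigma>\<in>T. \<tau>1 \<in> \<sigma> \<and> \<tau>2 \<in> \<sigma>)"

definition m_edge :: "'v set set set \<Rightarrow> ('v set set \<Rightarrow> real) \<Rightarrow> 'v set \<Rightarrow> 'v set \<Rightarrow> real" where
  "m_edge T w \<tau>1 \<tau>2 = (\<Sum>\<sigma>\<in>{\<sigma>\<in>T. \<tau>1 \<in> \<sigma> \<and> \<tau>2 \<in> \<sigma>}. w \<sigma>)"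

definition m_vert :: "'v set set \<Rightarrow> 'v set set set \<Rightarrow> ('v set set \<Rightarrow> real) \<Rightarrow> 'v \<Rightarrow> 'v set \<Rightarrow> real" where
  "m_vert E T w v \<tau> = (\<Sum>\<tau>'\<in>{\<tau>'. link_adj E T v \<tau> \<tau>'}. m_edge T w \<tau> \<tau>')"

definition m_set :: "'v set set \<Rightarrow> 'v set set set \<Rightarrow> ('v set set \<Rightarrow> real) \<Rightarrow> 'v \<Rightarrow> 'v set set \<Rightarrow> real" where
  "m_set E T w v B = (\<Sum>\<tau>\<in>B. m_vert E T w v \<tau>)"

definition vecs :: "'v set \<Rightarrow> ('v \<Rightarrow> 'a::zero) set" where
  "vecs V = {c. \<forall>v. v \<notin> V \<longrightarrow> c v = 0}"

definition dotp :: "'v set \<Rightarrow> ('v \<Rightarrow> 'a::comm_ring) \<Rightarrow> ('v \<Rightarrow> 'a) \<Rightarrow> 'a" where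
  "dotp V e c = (\<Sum>v\<in>V. e v * c v)"

definition supp :: "('v \<Rightarrow> 'a::zero) \<Rightarrow> 'v set" where
  "supp e = {v. e v \<noteq> 0}"

definition is_lin_dep :: "'v set \<Rightarrow> ('v \<Rightarrow> 'a::comm_ring) set \<Rightarrow> (('v \<Rightarrow> 'a) \<Rightarrow> 'a) \<Rightarrow> bool" where
  "is_lin_dep V \<E> ld \<longleftrightarrow> (\<forall>c\<in>vecs V. (\<Sum>e\<in>\<E>. ld e * dotp V e c) = 0)"

definition modelled_over ::
  "'v set \<Rightarrow> 'v set set \<Rightarrow> 'v set set set \<Rightarrow> ('v \<Rightarrow> 'a::field) set \<Rightarrow>
   ('v \<Rightarrow> 'a) set \<Rightarrow> (('v \<Rightarrow> 'a) \<Rightarrow> 'a) set \<Rightarrow> bool" where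
  "modelled_over V E T C \<E> \<T> \<longleftrightarrow>
     \<E> \<subseteq> vecs V \<and>
     C = {c \<in> vecs V. \<forall>e\<in>\<E>. dotp V e c = 0} \<and>
     bij_betw supp \<E> E \<and>
     (\<forall>ld\<in>\<T>. is_lin_dep V \<E> ld) \<and>
     T = (\<lambda>ld. {supp e | e. e \<in> \<E> \<and> ld e \<noteq> 0}) ` \<T>"

end

theory Submission
  imports Defs
begin

lemma dot_upd:
  assumes "finite V" "v0 \<in> V"
  shows "dotp V e (c(v0 := x)) = e v0 * x + (\<Sum>v\<in>V-{v0}. e v * c v)"
proof -
  have "dotp V e (c(v0 := x)) = e v0 * (c(v0:=x)) v0 + (\<Sum>v\<in>V-{v0}. e v * (c(v0:=x)) v)"
    unfolding dotp_def using assms by (simp add: sum.remove)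
  also have "(\<Sum>v\<in>V-{v0}. e v * (c(v0:=x)) v) = (\<Sum>v\<in>V-{v0}. e v * c v)"
    by (rule sum.cong) auto
  finally show ?thesis by (simp only: fun_upd_same)
qed

lemma card_nonzero_affine:
  fixes a r :: "'a::{field,finite}"
  assumes "a \<noteq> 0"
  shows "card {x. a * x + r \<noteq> 0} = card (UNIV::'a set) - 1"
proof -
  have "{x. a * x + r \<noteq> 0} = UNIV - {- r / a}"
    using assms by (auto simp: field_simps eq_neg_iff_add_eq_0 add.commute)
  then show ?thesis by (simp add: card_Diff_singleton)
qed

theorem lemma3p6:
  fixes s k K :: nat
    and V :: "'v set" and E :: "'v set set" and T :: "'v set set set"
    and w :: "'v set set \<Rightarrow> real"
    and C :: "('v \<Rightarrow> 'a::{field,finite}) set"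
    and \<E> :: "('v \<Rightarrow> 'a) set" and \<T> :: "(('v \<Rightarrow> 'a) \<Rightarrow> 'a) set"
    and v0 :: 'v and c :: "'v \<Rightarrow> 'a"
  assumes "two_layer_system s k K V E T"
    and "\<forall>\<sigma>\<in>T. w \<sigma> > 0"
    and "modelled_over V E T C \<E> \<T>"
    and "v0 \<in> V"
    and "c \<in> vecs V"
  shows "\<exists>c'\<in>vecs V. (\<forall>v. v \<noteq> v0 \<longrightarrow> c' v = c v) \<and>
           m_set E T w v0 {supp e | e. e \<in> \<E> \<and> supp e \<in> E_at E v0 \<and> dotp V e c' \<noteq> 0}
             / m_set E T w v0 (E_at E v0)
           \<le> (real (card (UNIV :: 'a set)) - 1) / real (card (UNIV :: 'a set))"
proof -
  define q where "q = card (UNIV :: 'a set)"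
  have q2: "q \<ge> 2" unfolding q_def
  proof -
    have "{0::'a, 1} \<subseteq> UNIV" by simp
    then have "card {0::'a,1} \<le> card (UNIV::'a set)" by (rule card_mono[OF finite_UNIV])
    then show "2 \<le> card (UNIV::'a set)" by simp
  qed
  have finV: "finite V" using assms(1) unfolding two_layer_system_def by blast
  have EP: "E \<subseteq> Pow V" using assms(1) unfolding two_layer_system_def by blast
  have finE: "finite E" using finV EP by (meson finite_Pow_iff finite_subset)
  define Ev where "Ev = E_at E v0"
  have EvE: "Ev \<subseteq> E" unfolding Ev_def E_at_def by auto
  have finEv: "finite Ev" using finE EvE finite_subset by blast
  have bij: "bij_betw supp \<E> E" using assms(3) unfolding modelled_over_def by blast
  have inj: "inj_on supp \<E>" and img: "supp ` \<E> = E" using bij by (auto simp: bij_betw_def)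
  define ev where "ev \<tau> = inv_into \<E> supp \<tau>" for \<tau>
  have ev_in: "ev \<tau> \<in> \<E>" if "\<tau> \<in> E" for \<tau>
    unfolding ev_def using that img by (metis inv_into_into)
  have ev_supp: "supp (ev \<tau>) = \<tau>" if "\<tau> \<in> E" for \<tau>
    unfolding ev_def using that img by (metis f_inv_into_f)
  have ev_v0: "ev \<tau> v0 \<noteq> 0" if "\<tau> \<in> Ev" for \<tau>
    using ev_supp[of \<tau>] that EvE unfolding Ev_def E_at_def supp_def by auto
  define r where "r \<tau> = (\<Sum>v\<in>V-{v0}. ev \<tau> v * c v)" for \<tau>
  define P where "P \<tau> x \<longleftrightarrow> ev \<tau> v0 * x + r \<tau> \<noteq> 0" for \<tau> x
  define m where "m \<tau> = m_vert E T w v0 \<tau>" for \<tau>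
  define f where "f x = (\<Sum>\<tau>\<in>Ev. if P \<tau> x then m \<tau> else 0)" for x
  have m_nn: "m \<tau> \<ge> 0" for \<tau>
    unfolding m_def m_vert_def m_edge_def
    by (intro sum_nonneg) (use assms(2) in auto)
  have setEq: "{supp e | e. e \<in> \<E> \<and> supp e \<in> E_at E v0 \<and> dotp V e (c(v0:=x)) \<noteq> 0}
      = {\<tau>\<in>Ev. P \<tau> x}" for x
  proof
    show "{supp e | e. e \<in> \<E> \<and> supp e \<in> E_at E v0 \<and> dotp V e (c(v0:=x)) \<noteq> 0} \<subseteq> {\<tau>\<in>Ev. P \<tau> x}"
    proof
      fix \<tau> assume "\<tau> \<in> {supp e | e. e \<in> \<E> \<and> supp e \<in> E_at E v0 \<and> dotp V e (c(v0:=x)) \<noteq> 0}"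
      then obtain e where e: "\<tau> = supp e" "e \<in> \<E>" "supp e \<in> Ev" "dotp V e (c(v0:=x)) \<noteq> 0"
        unfolding Ev_def by blast
      have "ev \<tau> = e" unfolding ev_def e(1) using e(2) inj by (simp add: inv_into_f_f)
      then show "\<tau> \<in> {\<tau>\<in>Ev. P \<tau> x}" using e dot_upd[OF finV assms(4), of e c x]
        unfolding P_def r_def by auto
    qed
  next
    show "{\<tau>\<in>Ev. P \<tau> x} \<subseteq> {supp e | e. e \<in> \<E> \<and> supp e \<in> E_at E v0 \<and> dotp V e (c(v0:=x)) \<noteq> 0}"
    proof
      fix \<tau> assume t: "\<tau> \<in> {\<tau>\<in>Ev. P \<tau> x}"
      then have tE: "\<tau> \<in> E" using EvE by auto
      show "\<tau> \<in> {supp e | e. e \<in> \<E> \<and> supp e \<in> E_at E v0 \<and> dotp V e (c(v0:=x)) \<noteq> 0}"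
        using t ev_in[OF tE] ev_supp[OF tE] dot_upd[OF finV assms(4), of "ev \<tau>" c x]
        unfolding P_def r_def Ev_def by (intro CollectI exI[of _ "ev \<tau>"]) auto
    qed
  qed
  have mset_f: "m_set E T w v0 {\<tau>\<in>Ev. P \<tau> x} = f x" for x
    unfolding m_set_def f_def m_def using finEv by (simp add: sum.inter_filter)
  define M where "M = m_set E T w v0 Ev"
  have M_nn: "M \<ge> 0" unfolding M_def m_set_def using m_nn unfolding m_def by (simp add: sum_nonneg)
  have sumf: "(\<Sum>x\<in>UNIV. f x) = (real q - 1) * M"
  proof -
    have "(\<Sum>x\<in>UNIV. f x) = (\<Sum>\<tau>\<in>Ev. \<Sum>x\<in>UNIV. if P \<tau> x then m \<tau> else 0)"
      unfolding f_def by (rule sum.swap)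
    also have "\<dots> = (\<Sum>\<tau>\<in>Ev. m \<tau> * real (card {x. P \<tau> x}))"
      by (rule sum.cong) (auto simp: sum.If_cases)
    also have "\<dots> = (\<Sum>\<tau>\<in>Ev. m \<tau> * (real q - 1))"
    proof (rule sum.cong)
      fix \<tau> assume "\<tau> \<in> Ev"
      then have "card {x. P \<tau> x} = q - 1" unfolding P_def q_def
        using card_nonzero_affine[OF ev_v0] by blast
      then show "m \<tau> * real (card {x. P \<tau> x}) = m \<tau> * (real q - 1)" using q2 by simp
    qed simp
    also have "\<dots> = (real q - 1) * M" unfolding M_def m_set_def m_def
      by (simp add: sum_distrib_left mult.commute)
    finally show ?thesis .
  qed
  have "Min (range f) \<in> range f" by (rule Min_in) auto
  then obtain x0 where x0: "f x0 = Min (range f)" by (metis imageE)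
  have x0min: "f x0 \<le> f x" for x
    unfolding x0 by (rule Min_le) auto
  have "real (card (UNIV::'a set)) * f x0 \<le> (\<Sum>x\<in>UNIV. f x)"
    using sum_bounded_below[of UNIV "f x0" f] x0min by simp
  then have le: "real q * f x0 \<le> (real q - 1) * M" using sumf q_def by simp
  have ratio: "f x0 / M \<le> (real q - 1) / real q"
  proof (cases "M = 0")
    case True then show ?thesis using q2 by simp
  next
    case False
    then have Mp: "M > 0" using M_nn by simp
    have qp: "real q > 0" using q2 by simp
    show ?thesis using le Mp qp by (simp add: divide_simps mult.commute)
  qed
  show ?thesis
  proof (intro bexI[of _ "c(v0 := x0)"] conjI allI impI)
    show "c(v0 := x0) \<in> vecs V" using assms(4,5) unfolding vecs_def by auto
  next
    fix v assume "v \<noteq> v0" then show "(c(v0 := x0)) v = c v" by simp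
  next
    show "m_set E T w v0 {supp e | e. e \<in> \<E> \<and> supp e \<in> E_at E v0 \<and> dotp V e (c(v0:=x0)) \<noteq> 0}
             / m_set E T w v0 (E_at E v0)
           \<le> (real (card (UNIV :: 'a set)) - 1) / real (card (UNIV :: 'a set))"
      unfolding setEq mset_f using ratio unfolding M_def Ev_def q_def .
  qed
qed

end
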